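(* Let $r,K,\alpha,\phi,c,m_1,m_2,\lambda,a,d,\delta,\gamma,\sigma,\eta$ be positive constants with $\phi<1$ and $m_1>m_2$, and consider the system \[ \begin{cases} \dot X = rX\left(1-\frac{X}{K}\right)-\frac{\alpha XS}{c+X}-\frac{\phi\alpha XI}{c+X},\\[1mm] \dot S = \frac{m_1\alpha XS}{c+X}-\frac{\lambda AS}{a+A}-dS,\\[1mm] \dot I = \frac{m_2\phi\alpha XI}{c+X}+\frac{\lambda AS}{a+A}-(d+\delta)I,\\[1mm] \dot A = \gamma+\sigma(S+I)-\eta A. \end{cases} \] Let $M:=\max\{X(0),K\}$ and \[ \mathcal D:=\left\{(X,S,I,A)\in\mathbb R_+^4:\ 0\le X\le M,\ 0\le X+S+I\le \frac{(r+4d)M}{4d},\ 0\le A\le \frac{4rd+\sigma(r+4d)M}{4\eta rd}\right\}. \] Then every solution of the system that starts in $\mathcal D$ is uniformly bounded.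
   Context: $\mathbb R_+^4$ denotes the closed non-negative orthant. *)

theory Defs
  imports "HOL-Analysis.Analysis"
begin

definition regionD :: "real \<Rightarrow> real \<Rightarrow> real \<Rightarrow> real \<Rightarrow> real \<Rightarrow> (real \<times> real \<times> real \<times> real) set" where
  "regionD M r d \<sigma> \<eta> = {(x, s, i, a). x \<ge> 0 \<and> s \<ge> 0 \<and> i \<ge> 0 \<and> a \<ge> 0 \<and>
      x \<le> M \<and> x + s + i \<le> (r + 4*d) * M / (4*d) \<and>
      a \<le> (4*r*d + \<sigma>*(r + 4*d)*M) / (4*\<eta>*r*d)}"

end

theory Submission imports Defs begin

lemma nonneg_lemma:
  fixes f f' :: "real \<Rightarrow> real" and L u v :: real
  assumes u0: "0 \<le> u" and uv: "u \<le> v" and fu: "f u \<ge> 0"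
    and der: "\<And>t. u \<le> t \<Longrightarrow> t \<le> v \<Longrightarrow> (f has_real_derivative f' t) (at t within {0..})"
    and cond: "\<And>t. u < t \<Longrightarrow> t < v \<Longrightarrow> f t < 0 \<Longrightarrow> f' t \<ge> L * f t"
  shows "f v \<ge> 0"
proof (rule ccontr)
  assume fv: "\<not> f v \<ge> 0"
  have cont: "continuous_on {u..v} f"
    unfolding continuous_on_eq_continuous_within
  proof
    fix t assume t: "t \<in> {u..v}"
    have "(f has_real_derivative f' t) (at t within {u..v})"
      using der[of t] t u0 by (auto intro: DERIV_subset)
    then show "continuous (at t within {u..v}) f" by (rule DERIV_continuous)
  qed
  define Z where "Z = {u..v} \<inter> f -` {0..}"
  have closedZ: "closed Z" unfolding Z_def
    by (rule continuous_closed_preimage[OF cont]) auto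
  have uZ: "u \<in> Z" using uv fu by (auto simp: Z_def)
  have bdd: "bdd_above Z" by (auto simp: Z_def bdd_above_def)
  define t0 where "t0 = Sup Z"
  have t0Z: "t0 \<in> Z" unfolding t0_def using closed_contains_Sup[OF _ bdd closedZ] uZ by blast
  have ut0: "u \<le> t0" unfolding t0_def using cSup_upper[OF uZ bdd] .
  have ft0: "f t0 \<ge> 0" "t0 \<le> v" using t0Z by (auto simp: Z_def)
  have t0v: "t0 < v" using ft0 fv by (cases "t0 = v") auto
  have neg: "f s < 0" if "t0 < s" "s \<le> v" for s
  proof (rule ccontr)
    assume "\<not> f s < 0"
    then have "s \<in> Z" using that ut0 by (auto simp: Z_def)
    then have "s \<le> t0" unfolding t0_def using cSup_upper[OF _ bdd] by blast
    then show False using that by simp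
  qed
  define h where "h s = f s * exp (- L * s)" for s
  have hder: "(h has_real_derivative (f' s * exp (- L * s) + f s * (exp (- L * s) * (- L)))) (at s within {0..})"
    if "u \<le> s" "s \<le> v" for s
    unfolding h_def
    by (rule derivative_eq_intros der that refl | simp)+
  have "h t0 \<le> h v"
  proof (rule DERIV_nonneg_imp_increasing_open[OF less_imp_le[OF t0v]])
    fix x assume x: "t0 < x" "x < v"
    have "at x within {0..} = at x"
      using x ut0 u0 by (intro at_within_interior) auto
    then have d: "DERIV h x :> (f' x * exp (- L * x) + f x * (exp (- L * x) * (- L)))"
      using hder[of x] x ut0 by auto
    have "f x < 0" using neg x by auto
    then have "f' x \<ge> L * f x" using cond x ut0 by auto
    then have "0 \<le> (f' x - L * f x) * exp (- L * x)" by simp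
    then show "\<exists>y. DERIV h x :> y \<and> 0 \<le> y" using d by (intro exI[of _ "f' x * exp (- L * x) + f x * (exp (- L * x) * (- L))"]) (auto simp: algebra_simps)
  next
    show "continuous_on {t0..v} h"
      unfolding continuous_on_eq_continuous_within
    proof
      fix t assume t: "t \<in> {t0..v}"
      have "(h has_real_derivative (f' t * exp (- L * t) + f t * (exp (- L * t) * (- L)))) (at t within {t0..v})"
        using hder[of t] t u0 ut0 by (auto intro: DERIV_subset)
      then show "continuous (at t within {t0..v}) h" by (rule DERIV_continuous)
    qed
  qed
  moreover have "h t0 \<ge> 0" using ft0 by (simp add: h_def)
  moreover have "h v < 0" using fv by (simp add: h_def mult_neg_pos)
  ultimately show False by simp
qed


lemma left_closed:
  fixes f :: "real \<Rightarrow> real"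
  assumes cont: "continuous_on {0..} f" and T: "0 < T" and nn: "\<And>s. 0 \<le> s \<Longrightarrow> s < T \<Longrightarrow> f s \<ge> 0"
  shows "f T \<ge> 0"
proof -
  have c: "continuous_on {0..T} f" using cont by (rule continuous_on_subset) auto
  have cl: "closed ({0..T} \<inter> f -` {0..})"
    by (rule continuous_closed_preimage[OF c]) auto
  have "{0..<T} \<subseteq> {0..T} \<inter> f -` {0..}" using nn by auto
  then have "closure {0..<T} \<subseteq> {0..T} \<inter> f -` {0..}" using cl by (rule closure_minimal)
  then have "T \<in> {0..T} \<inter> f -` {0..}" using T closure_atLeastLessThan[OF T] by (metis atLeastAtMost_iff less_imp_le order_refl subsetD)
  then show ?thesis by simp
qed

lemma contD:
  assumes "\<And>t. t \<ge> 0 \<Longrightarrow> (f has_real_derivative f' t) (at t within {0..})"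
  shows "continuous_on {0..} f"
  unfolding continuous_on_eq_continuous_within
  using assms by (auto intro: DERIV_continuous)

theorem theorem1:
  fixes r K \<alpha> \<phi> c m\<^sub>1 m\<^sub>2 lam a d \<delta> \<gamma> \<sigma> \<eta> :: real
    and X S I A :: "real \<Rightarrow> real"
  assumes pos: "r > 0" "K > 0" "\<alpha> > 0" "\<phi> > 0" "c > 0" "m\<^sub>1 > 0" "m\<^sub>2 > 0" "lam > 0"
      "a > 0" "d > 0" "\<delta> > 0" "\<gamma> > 0" "\<sigma> > 0" "\<eta> > 0"
    and \<phi>_lt: "\<phi> < 1"
    and m_gt: "m\<^sub>1 > m\<^sub>2"
    and dX: "\<And>t. t \<ge> 0 \<Longrightarrow> (X has_real_derivative
              (r * X t * (1 - X t / K) - \<alpha> * X t * S t / (c + X t) - \<phi> * \<alpha> * X t * I t / (c + X t)))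
              (at t within {0..})"
    and dS: "\<And>t. t \<ge> 0 \<Longrightarrow> (S has_real_derivative
              (m\<^sub>1 * \<alpha> * X t * S t / (c + X t) - lam * A t * S t / (a + A t) - d * S t))
              (at t within {0..})"
    and dI: "\<And>t. t \<ge> 0 \<Longrightarrow> (I has_real_derivative
              (m\<^sub>2 * \<phi> * \<alpha> * X t * I t / (c + X t) + lam * A t * S t / (a + A t) - (d + \<delta>) * I t))
              (at t within {0..})"
    and dA: "\<And>t. t \<ge> 0 \<Longrightarrow> (A has_real_derivative
              (\<gamma> + \<sigma> * (S t + I t) - \<eta> * A t))
              (at t within {0..})"
    and init: "(X 0, S 0, I 0, A 0) \<in> regionD (max (X 0) K) r d \<sigma> \<eta>"
  shows "\<exists>B. \<forall>t\<ge>0. \<bar>X t\<bar> \<le> B \<and> \<bar>S t\<bar> \<le> B \<and> \<bar>I t\<bar> \<le> B \<and> \<bar>A t\<bar> \<le> B"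
  proof -
  note p = pos
  have c0: "\<And>t. c + X t \<noteq> 0 \<Longrightarrow> True" by simp
  define X' where "X' t = r * X t * (1 - X t / K) - \<alpha> * X t * S t / (c + X t) - \<phi> * \<alpha> * X t * I t / (c + X t)" for t
  define S' where "S' t = m\<^sub>1 * \<alpha> * X t * S t / (c + X t) - lam * A t * S t / (a + A t) - d * S t" for t
  define I' where "I' t = m\<^sub>2 * \<phi> * \<alpha> * X t * I t / (c + X t) + lam * A t * S t / (a + A t) - (d + \<delta>) * I t" for t
  define A' where "A' t = \<gamma> + \<sigma> * (S t + I t) - \<eta> * A t" for t
  have dX': "\<And>t. t \<ge> 0 \<Longrightarrow> (X has_real_derivative X' t) (at t within {0..})" using dX by (simp add: X'_def)
  have dS': "\<And>t. t \<ge> 0 \<Longrightarrow> (S has_real_derivative S' t) (at t within {0..})" using dS by (simp add: S'_def)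
  have dI': "\<And>t. t \<ge> 0 \<Longrightarrow> (I has_real_derivative I' t) (at t within {0..})" using dI by (simp add: I'_def)
  have dA': "\<And>t. t \<ge> 0 \<Longrightarrow> (A has_real_derivative A' t) (at t within {0..})" using dA by (simp add: A'_def)
  have cX: "continuous_on {0..} X" by (rule contD[OF dX'])
  have cS: "continuous_on {0..} S" by (rule contD[OF dS'])
  have cI: "continuous_on {0..} I" by (rule contD[OF dI'])
  have cA: "continuous_on {0..} A" by (rule contD[OF dA'])
  have i0: "X 0 \<ge> 0" "S 0 \<ge> 0" "I 0 \<ge> 0" "A 0 \<ge> 0" using init by (auto simp: regionD_def)
  define good where "good t \<longleftrightarrow> X t \<ge> 0 \<and> S t \<ge> 0 \<and> I t \<ge> 0 \<and> A t \<ge> 0" for t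
  have ext: "\<exists>b>t. \<forall>y. t < y \<and> y < b \<longrightarrow> good y" if t0: "t \<ge> 0" and gt: "good t" for t
  proof -
    define g where "g s = r * (1 - X s / K) - \<alpha> * S s / (c + X s) - \<phi> * \<alpha> * I s / (c + X s)" for s
    define h where "h s = m\<^sub>1 * \<alpha> * X s / (c + X s) - lam * A s / (a + A s) - d" for s
    define k where "k s = m\<^sub>2 * \<phi> * \<alpha> * X s / (c + X s) - (d + \<delta>)" for s
    define q where "q s = \<gamma> + \<sigma> * (S s + I s)" for s
    let ?F = "at t within {0..}"
    have tX: "(X \<longlongrightarrow> X t) ?F" using cX t0 by (simp add: continuous_on_eq_continuous_within continuous_within)
    have tS: "(S \<longlongrightarrow> S t) ?F" using cS t0 by (simp add: continuous_on_eq_continuous_within continuous_within)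
    have tI: "(I \<longlongrightarrow> I t) ?F" using cI t0 by (simp add: continuous_on_eq_continuous_within continuous_within)
    have tA: "(A \<longlongrightarrow> A t) ?F" using cA t0 by (simp add: continuous_on_eq_continuous_within continuous_within)
    have nz1: "c + X t \<noteq> 0" using gt p by (simp add: good_def)
    have nz2: "a + A t \<noteq> 0" using gt p by (simp add: good_def)
    have tg: "(g \<longlongrightarrow> g t) ?F" unfolding g_def by (intro tendsto_intros tX tS tI nz1) (use p in auto)
    have th: "(h \<longlongrightarrow> h t) ?F" unfolding h_def by (intro tendsto_intros tX tA nz1 nz2)
    have tk: "(k \<longlongrightarrow> k t) ?F" unfolding k_def by (intro tendsto_intros tX nz1)
    have tq: "(q \<longlongrightarrow> q t) ?F" unfolding q_def by (intro tendsto_intros tS tI)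
    have qpos: "q t > 0" using gt p by (simp add: good_def q_def add_pos_nonneg)
    have ev: "eventually (\<lambda>s. g s < g t + 1 \<and> h s < h t + 1 \<and> k s < k t + 1 \<and> q s > 0) ?F"
      using order_tendstoD(2)[OF tg less_add_one] order_tendstoD(2)[OF th less_add_one]
        order_tendstoD(2)[OF tk less_add_one] order_tendstoD(1)[OF tq qpos]
      by eventually_elim auto
    have "at_right t \<le> ?F" using t0 by (auto intro: at_le)
    then have "eventually (\<lambda>s. g s < g t + 1 \<and> h s < h t + 1 \<and> k s < k t + 1 \<and> q s > 0) (at_right t)"
      using ev by (rule filter_leD)
    then obtain b where b: "b > t" and bP: "\<And>s. t < s \<Longrightarrow> s < b \<Longrightarrow> g s < g t + 1 \<and> h s < h t + 1 \<and> k s < k t + 1 \<and> q s > 0"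
      unfolding eventually_at_right_field by blast
    have Xn: "X y \<ge> 0" if "t < y" "y < b" for y
    proof (rule nonneg_lemma[where f = X and f' = X' and L = "g t + 1"])
      show "0 \<le> t" "t \<le> y" "X t \<ge> 0" using that t0 gt by (auto simp: good_def)
      show "(X has_real_derivative X' s) (at s within {0..})" if "t \<le> s" "s \<le> y" for s
        using dX' that t0 by auto
      fix s assume s: "t < s" "s < y" "X s < 0"
      have eq: "X' s = X s * g s" by (simp add: X'_def g_def algebra_simps)
      have "g s < g t + 1" using bP[of s] s that by auto
      then show "X' s \<ge> (g t + 1) * X s" unfolding eq using s(3)
        by (simp add: mult.commute mult_le_cancel_left_neg)
    qed
    have Sn: "S y \<ge> 0" if "t < y" "y < b" for y
    proof (rule nonneg_lemma[where f = S and f' = S' and L = "h t + 1"])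
      show "0 \<le> t" "t \<le> y" "S t \<ge> 0" using that t0 gt by (auto simp: good_def)
      show "(S has_real_derivative S' s) (at s within {0..})" if "t \<le> s" "s \<le> y" for s
        using dS' that t0 by auto
      fix s assume s: "t < s" "s < y" "S s < 0"
      have eq: "S' s = S s * h s" by (simp add: S'_def h_def algebra_simps)
      have "h s < h t + 1" using bP[of s] s that by auto
      then show "S' s \<ge> (h t + 1) * S s" unfolding eq using s(3)
        by (simp add: mult.commute mult_le_cancel_left_neg)
    qed
    have An: "A y \<ge> 0" if "t < y" "y < b" for y
    proof (rule nonneg_lemma[where f = A and f' = A' and L = "- \<eta>"])
      show "0 \<le> t" "t \<le> y" "A t \<ge> 0" using that t0 gt by (auto simp: good_def)
      show "(A has_real_derivative A' s) (at s within {0..})" if "t \<le> s" "s \<le> y" for s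
        using dA' that t0 by auto
      fix s assume s: "t < s" "s < y" "A s < 0"
      have "q s > 0" using bP[of s] s that by auto
      then show "A' s \<ge> (- \<eta>) * A s" by (simp add: A'_def q_def)
    qed
    have In: "I y \<ge> 0" if "t < y" "y < b" for y
    proof (rule nonneg_lemma[where f = I and f' = I' and L = "k t + 1"])
      show "0 \<le> t" "t \<le> y" "I t \<ge> 0" using that t0 gt by (auto simp: good_def)
      show "(I has_real_derivative I' s) (at s within {0..})" if "t \<le> s" "s \<le> y" for s
        using dI' that t0 by auto
      fix s assume s: "t < s" "s < y" "I s < 0"
      have eq: "I' s = I s * k s + lam * A s * S s / (a + A s)" by (simp add: I'_def k_def algebra_simps)
      have As: "A s \<ge> 0" "S s \<ge> 0" using An[of s] Sn[of s] s that by auto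
      have pnn: "lam * A s * S s / (a + A s) \<ge> 0" using As p by (intro divide_nonneg_pos) auto
      have "k s < k t + 1" using bP[of s] s that by auto
      then have "I s * k s \<ge> (k t + 1) * I s" using s(3)
        by (simp add: mult.commute mult_le_cancel_left_neg)
      then show "I' s \<ge> (k t + 1) * I s" unfolding eq using pnn by linarith
    qed
    show ?thesis using b Xn Sn In An by (auto simp: good_def)
  qed
  have nn: "good t" if "t \<ge> 0" for t
  proof (rule ccontr)
    assume nt: "\<not> good t"
    define Bad where "Bad = {s. 0 \<le> s \<and> \<not> good s}"
    have Bne: "Bad \<noteq> {}" using nt that by (auto simp: Bad_def)
    have Bbdd: "bdd_below Bad" by (auto simp: Bad_def bdd_below_def)
    define ts where "ts = Inf Bad"
    have ts0: "ts \<ge> 0" unfolding ts_def using Bne by (intro cInf_greatest) (auto simp: Bad_def)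
    have before: "good s" if "0 \<le> s" "s < ts" for s
    proof (rule ccontr)
      assume "\<not> good s"
      then have "s \<in> Bad" using that by (auto simp: Bad_def)
      then have "ts \<le> s" unfolding ts_def using Bbdd by (rule cInf_lower)
      then show False using that by simp
    qed
    have gts: "good ts"
    proof (cases "ts = 0")
      case True then show ?thesis using i0 by (simp add: good_def)
    next
      case False
      then have tp: "ts > 0" using ts0 by simp
      have "X ts \<ge> 0" by (rule left_closed[OF cX tp]) (use before in \<open>auto simp: good_def\<close>)
      moreover have "S ts \<ge> 0" by (rule left_closed[OF cS tp]) (use before in \<open>auto simp: good_def\<close>)
      moreover have "I ts \<ge> 0" by (rule left_closed[OF cI tp]) (use before in \<open>auto simp: good_def\<close>)
      moreover have "A ts \<ge> 0" by (rule left_closed[OF cA tp]) (use before in \<open>auto simp: good_def\<close>)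
      ultimately show ?thesis by (simp add: good_def)
    qed
    obtain b where b: "b > ts" and bg: "\<And>y. ts < y \<Longrightarrow> y < b \<Longrightarrow> good y" using ext[OF ts0 gts] by blast
    have "b \<le> ts" unfolding ts_def
    proof (rule cInf_greatest[OF Bne])
      fix x assume x: "x \<in> Bad"
      show "b \<le> x"
      proof (rule ccontr)
        assume "\<not> b \<le> x"
        then have "x < b" by simp
        moreover have "\<not> good x" "0 \<le> x" using x by (auto simp: Bad_def)
        ultimately show False using before bg gts by (cases "x < ts"; cases "x = ts") auto
      qed
    qed
    then show False using b by simp
  qed
  define M where "M = max (X 0) K"
  have nnX: "X t \<ge> 0" and nnS: "S t \<ge> 0" and nnI: "I t \<ge> 0" and nnA: "A t \<ge> 0" if "t \<ge> 0" for t
    using nn[OF that] by (auto simp: good_def)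
  have XM: "X t \<le> M" if t0: "t \<ge> 0" for t
  proof -
    have "M - X t \<ge> 0"
    proof (rule nonneg_lemma[where f = "\<lambda>t. M - X t" and f' = "\<lambda>t. 0 - X' t" and L = 0 and u = 0])
      show "(0::real) \<le> 0" "0 \<le> t" "M - X 0 \<ge> 0" using t0 by (auto simp: M_def)
      show "((\<lambda>t. M - X t) has_real_derivative 0 - X' s) (at s within {0..})" if "0 \<le> s" "s \<le> t" for s
        using dX'[of s] that by (intro DERIV_diff DERIV_const) auto
      fix s assume s: "0 < s" "s < t" "M - X s < 0"
      have xs: "X s > K" "X s \<ge> 0" "S s \<ge> 0" "I s \<ge> 0" using s nnX nnS nnI by (auto simp: M_def)
      have "1 - X s / K < 0" using xs p by simp
      then have t1: "r * X s * (1 - X s / K) \<le> 0" using xs p by (intro mult_nonneg_nonpos) auto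
      have t2: "\<alpha> * X s * S s / (c + X s) \<ge> 0" using xs p by (intro divide_nonneg_pos) auto
      have t3: "\<phi> * \<alpha> * X s * I s / (c + X s) \<ge> 0" using xs p by (intro divide_nonneg_pos) auto
      show "0 - X' s \<ge> 0 * (M - X s)" using t1 t2 t3 by (simp add: X'_def)
    qed
    then show ?thesis by simp
  qed
  define W where "W t = X t + S t / m\<^sub>1 + I t / m\<^sub>1" for t
  define BW where "BW = max (W 0) ((r + d) * M / d)"
  have WB: "W t \<le> BW" if t0: "t \<ge> 0" for t
  proof -
    have "BW - W t \<ge> 0"
    proof (rule nonneg_lemma[where f = "\<lambda>t. BW - W t" and f' = "\<lambda>t. 0 - (X' t + S' t / m\<^sub>1 + I' t / m\<^sub>1)" and L = 0 and u = 0])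
      show "(0::real) \<le> 0" "0 \<le> t" "BW - W 0 \<ge> 0" using t0 by (auto simp: BW_def)
      show "((\<lambda>t. BW - W t) has_real_derivative 0 - (X' s + S' s / m\<^sub>1 + I' s / m\<^sub>1)) (at s within {0..})" if "0 \<le> s" "s \<le> t" for s
        unfolding W_def using dX'[of s] dS'[of s] dI'[of s] that by (intro DERIV_diff DERIV_const DERIV_add DERIV_cdivide) auto
      fix s assume s: "0 < s" "s < t" "BW - W s < 0"
      have xs: "X s \<ge> 0" "S s \<ge> 0" "I s \<ge> 0" "A s \<ge> 0" "X s \<le> M" using s nnX nnS nnI nnA XM by auto
      have cx: "c + X s > 0" "a + A s > 0" using xs p by auto
      have eq: "X' s + S' s / m\<^sub>1 + I' s / m\<^sub>1 = r * X s - r * X s * X s / K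
          - \<phi> * \<alpha> * (X s * I s / (c + X s)) * ((m\<^sub>1 - m\<^sub>2) / m\<^sub>1) - d * (S s / m\<^sub>1) - d * (I s / m\<^sub>1) - \<delta> * I s / m\<^sub>1"
      proof -
        define P where "P = X s * I s / (c + X s)"
        define Q where "Q = X s * S s / (c + X s)"
        define R where "R = A s * S s / (a + A s)"
        have e1: "X' s = r * X s - r * X s * X s / K - \<alpha> * Q - \<phi> * \<alpha> * P"
          unfolding X'_def P_def Q_def by (simp add: algebra_simps diff_divide_distrib)
        have e2: "S' s = m\<^sub>1 * \<alpha> * Q - lam * R - d * S s"
          unfolding S'_def R_def Q_def by (simp add: algebra_simps)
        have e3: "I' s = m\<^sub>2 * \<phi> * \<alpha> * P + lam * R - (d + \<delta>) * I s"
          unfolding I'_def R_def P_def by (simp add: algebra_simps)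
        show ?thesis unfolding e1 e2 e3 P_def[symmetric] using p by (simp add: field_simps)
      qed
      have f1: "r * X s * X s / K \<ge> 0" using xs p by simp
      have f2: "\<phi> * \<alpha> * (X s * I s / (c + X s)) * ((m\<^sub>1 - m\<^sub>2) / m\<^sub>1) \<ge> 0" using xs p m_gt cx by simp
      have f3: "\<delta> * I s / m\<^sub>1 \<ge> 0" using xs p by simp
      have f4: "r * X s \<le> r * M" "d * X s \<le> d * M" using xs p by simp_all
      have "W s > (r + d) * M / d" using s by (simp add: BW_def)
      then have f5: "d * W s > (r + d) * M" using p by (simp add: pos_divide_less_eq mult.commute)
      have "X' s + S' s / m\<^sub>1 + I' s / m\<^sub>1 \<le> 0"
        unfolding eq using f1 f2 f3 f4 f5 unfolding W_def by (simp add: algebra_simps)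
      then show "0 - (X' s + S' s / m\<^sub>1 + I' s / m\<^sub>1) \<ge> 0 * (BW - W s)" by simp
    qed
    then show ?thesis by simp
  qed
  have SB: "S t \<le> m\<^sub>1 * BW" and IB: "I t \<le> m\<^sub>1 * BW" if t0: "t \<ge> 0" for t
  proof -
    have "S t / m\<^sub>1 \<le> BW" "I t / m\<^sub>1 \<le> BW" proof -
      have "S t / m\<^sub>1 \<ge> 0" "I t / m\<^sub>1 \<ge> 0" using nnS[OF t0] nnI[OF t0] p by simp_all
      then show "S t / m\<^sub>1 \<le> BW" "I t / m\<^sub>1 \<le> BW" using WB[OF t0] nnX[OF t0] unfolding W_def by linarith+
    qed
    then show "S t \<le> m\<^sub>1 * BW" "I t \<le> m\<^sub>1 * BW" using p by (simp_all add: pos_divide_le_eq mult.commute)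
  qed
  define BA where "BA = max (A 0) ((\<gamma> + \<sigma> * (2 * (m\<^sub>1 * BW))) / \<eta>)"
  have AB: "A t \<le> BA" if t0: "t \<ge> 0" for t
  proof -
    have "BA - A t \<ge> 0"
    proof (rule nonneg_lemma[where f = "\<lambda>t. BA - A t" and f' = "\<lambda>t. 0 - A' t" and L = 0 and u = 0])
      show "(0::real) \<le> 0" "0 \<le> t" "BA - A 0 \<ge> 0" using t0 by (auto simp: BA_def)
      show "((\<lambda>t. BA - A t) has_real_derivative 0 - A' s) (at s within {0..})" if "0 \<le> s" "s \<le> t" for s
        using dA'[of s] that by (intro DERIV_diff DERIV_const) auto
      fix s assume s: "0 < s" "s < t" "BA - A s < 0"
      have "S s + I s \<le> 2 * (m\<^sub>1 * BW)" using SB[of s] IB[of s] s by auto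
      then have f1: "\<sigma> * (S s + I s) \<le> \<sigma> * (2 * (m\<^sub>1 * BW))" using p by simp
      have "A s > (\<gamma> + \<sigma> * (2 * (m\<^sub>1 * BW))) / \<eta>" using s by (simp add: BA_def)
      then have f2: "\<eta> * A s > \<gamma> + \<sigma> * (2 * (m\<^sub>1 * BW))" using p by (simp add: pos_divide_less_eq mult.commute)
      show "0 - A' s \<ge> 0 * (BA - A s)" using f1 f2 by (simp add: A'_def)
    qed
    then show ?thesis by simp
  qed
  show ?thesis
  proof (intro exI[of _ "max M (max (m\<^sub>1 * BW) BA)"] allI impI)
    fix t :: real assume t0: "t \<ge> 0"
    show "\<bar>X t\<bar> \<le> max M (max (m\<^sub>1 * BW) BA) \<and> \<bar>S t\<bar> \<le> max M (max (m\<^sub>1 * BW) BA) \<and>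
          \<bar>I t\<bar> \<le> max M (max (m\<^sub>1 * BW) BA) \<and> \<bar>A t\<bar> \<le> max M (max (m\<^sub>1 * BW) BA)"
      using XM[OF t0] SB[OF t0] IB[OF t0] AB[OF t0] nnX[OF t0] nnS[OF t0] nnI[OF t0] nnA[OF t0] by auto
  qed
qed

end
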